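(* Consider the family of binary symmetric channels with crossover probability $\theta\in[0,1]$, so that $P_\theta(\mathbf y|\mathbf x)=\theta^{d(\mathbf x,\mathbf y)}(1-\theta)^{N-d(\mathbf x,\mathbf y)}$ for $\mathbf x,\mathbf y\in\{0,1\}^N$. Fix $\xi\in[0,1]$ and let $f(\mathbf x,\mathbf y)=\max_{0\le\theta\le1}\left[\frac1N\ln P_\theta(\mathbf y|\mathbf x)+\xi E_r^*(\theta)\right]$, and $\rho(\mathbf x,\mathbf y)=\min\{\delta(\mathbf x,\mathbf y),1-\delta(\mathbf x,\mathbf y)\}$. Then for every $\mathbf y\in\{0,1\}^N$ and all $\mathbf x_1,\mathbf x_2\in\{0,1\}^N$, $f(\mathbf x_1,\mathbf y)\ge f(\mathbf x_2,\mathbf y)$ if and only if $\rho(\mathbf x_1,\mathbf y)\le\rho(\mathbf x_2,\mathbf y)$. Consequently, the minimax decision rule (choose the codeword maximizing $f$) is equivalent to the rule choosing the codeword minimizing $\rho$.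
   Context: $d(\mathbf x,\mathbf y)$ is the Hamming distance and $\delta(\mathbf x,\mathbf y)=d(\mathbf x,\mathbf y)/N$. $E_r^*(\theta)=\max_{0\le\rho\le1}\{\rho\ln2-(1+\rho)\ln[(1-\theta)^{1/(1+\rho)}+\theta^{1/(1+\rho)}]-\rho R\}$ is the random coding error exponent of ML decoding for the BSC at rate $R$ (symmetric about $\theta=1/2$). *)

theory Defs
  imports "HOL-Analysis.Analysis"
begin

text \<open>Binary words of length N are modelled as bool lists of length N.\<close>

definition hamming :: "bool list \<Rightarrow> bool list \<Rightarrow> nat" where
  "hamming x y = card {i. i < length x \<and> x ! i \<noteq> y ! i}"

definition rel_dist :: "nat \<Rightarrow> bool list \<Rightarrow> bool list \<Rightarrow> real" where
  "rel_dist N x y = real (hamming x y) / real N"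

text \<open>BSC transition probability P_theta(y|x); note 0^0 = 1.\<close>
definition bsc_prob :: "nat \<Rightarrow> real \<Rightarrow> bool list \<Rightarrow> bool list \<Rightarrow> real" where
  "bsc_prob N \<theta> x y = \<theta> ^ hamming x y * (1 - \<theta>) ^ (N - hamming x y)"

definition Er_star :: "real \<Rightarrow> real \<Rightarrow> real" where
  "Er_star R \<theta> = (SUP r\<in>{0..1::real}. r * ln 2
       - (1 + r) * ln ((1 - \<theta>) powr (1 / (1 + r)) + \<theta> powr (1 / (1 + r))) - r * R)"

definition ln_ext :: "real \<Rightarrow> ereal" where
  "ln_ext p = (if p > 0 then ereal (ln p) else -\<infinity>)"

definition minimax_metric :: "nat \<Rightarrow> real \<Rightarrow> real \<Rightarrow> bool list \<Rightarrow> bool list \<Rightarrow> ereal" where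
  "minimax_metric N R \<xi> x y =
     (SUP \<theta>\<in>{0..1::real}. ereal (1 / real N) * ln_ext (bsc_prob N \<theta> x y) + ereal (\<xi> * Er_star R \<theta>))"

definition rho_metric :: "nat \<Rightarrow> bool list \<Rightarrow> bool list \<Rightarrow> real" where
  "rho_metric N x y = min (rel_dist N x y) (1 - rel_dist N x y)"

end

theory Submission
  imports Defs
begin


definition Eterm :: "real \<Rightarrow> real \<Rightarrow> real \<Rightarrow> real" where
  "Eterm R \<theta> r = r * ln 2 - (1 + r) * ln ((1 - \<theta>) powr (1 / (1 + r)) + \<theta> powr (1 / (1 + r))) - r * R"

lemma Er_eq: "Er_star R \<theta> = (SUP r\<in>{0..1::real}. Eterm R \<theta> r)"
  unfolding Er_star_def Eterm_def by simp

lemma powr_ge_self: "0 \<le> (x::real) \<Longrightarrow> x \<le> 1 \<Longrightarrow> a \<le> 1 \<Longrightarrow> x \<le> x powr a"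
  using powr_mono'[of a 1 x] by (simp add: powr_one)

lemma S_ge1:
  assumes "0 \<le> (\<theta>::real)" "\<theta> \<le> 1" "(a::real) \<le> 1"
  shows "1 \<le> (1-\<theta>) powr a + \<theta> powr a"
  using powr_ge_self[of "1-\<theta>" a] powr_ge_self[of \<theta> a] assms by linarith

lemma Eterm_le: assumes "0 \<le> \<theta>" "\<theta> \<le> 1" "0 \<le> R" "r \<in> {0..1}"
  shows "Eterm R \<theta> r \<le> ln 2"
proof -
  have "1 \<le> (1-\<theta>) powr (1/(1+r)) + \<theta> powr (1/(1+r))"
    using assms by (intro S_ge1) auto
  hence "0 \<le> ln ((1-\<theta>) powr (1/(1+r)) + \<theta> powr (1/(1+r)))" by simp
  moreover have "0 \<le> (1+r)" "r * ln 2 \<le> ln 2" "0 \<le> r * R" using assms by auto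
  ultimately show ?thesis unfolding Eterm_def
    by (smt (verit) mult_nonneg_nonneg)
qed

lemma Eterm_bdd: assumes "0 \<le> \<theta>" "\<theta> \<le> 1" "0 \<le> R"
  shows "bdd_above (Eterm R \<theta> ` {0..1})"
  using Eterm_le[OF assms] by (intro bdd_aboveI[of _ "ln 2"]) auto

lemma Er_nonneg: assumes "0 \<le> \<theta>" "\<theta> \<le> 1" "0 \<le> R"
  shows "0 \<le> Er_star R \<theta>"
proof -
  have "Eterm R \<theta> 0 = 0" unfolding Eterm_def using assms by (simp add: powr_one)
  thus ?thesis unfolding Er_eq using cSUP_upper[OF _ Eterm_bdd[OF assms], of 0] by simp
qed

lemma Er_le_ln2: assumes "0 \<le> \<theta>" "\<theta> \<le> 1" "0 \<le> R"
  shows "Er_star R \<theta> \<le> ln 2"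
  unfolding Er_eq using Eterm_le[OF assms] by (intro cSUP_least) auto

lemma Eterm_half: assumes "0 < \<theta>" "\<theta> < 1" "0 \<le> R" "r \<in> {0..1}"
  shows "Eterm R \<theta> r \<le> - ln 2 - (ln \<theta> + ln (1-\<theta>)) / 2"
proof -
  define a where "a = 1/(1+r)"
  have r: "0 \<le> r" "r \<le> 1" using assms by auto
  have a1: "(1+r) * a = 1" unfolding a_def using r by simp
  define p where "p = \<theta> powr (a/2)"
  define q where "q = (1-\<theta>) powr (a/2)"
  have pp: "\<theta> powr a = p*p" unfolding p_def by (simp add: powr_add[symmetric])
  have qq: "(1-\<theta>) powr a = q*q" unfolding q_def by (simp add: powr_add[symmetric])
  have pq: "p > 0" "q > 0" unfolding p_def q_def using assms by auto
  have "2*p*q \<le> p*p + q*q" using sum_squares_ge_zero[of "p-q" 0] by (simp add: algebra_simps power2_eq_square)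
  hence "ln (2*p*q) \<le> ln ((1-\<theta>) powr a + \<theta> powr a)" proof -
    have "0 < p*p + q*q" using pq by (intro add_pos_pos mult_pos_pos)
    moreover have "0 < 2*p*q" using pq by simp
    ultimately show ?thesis using \<open>2*p*q \<le> p*p + q*q\<close> pp qq by (simp add: add.commute)
  qed
  moreover have "ln (2*p*q) = ln 2 + (a/2) * ln \<theta> + (a/2) * ln (1-\<theta>)"
    using pq unfolding p_def q_def by (simp add: ln_mult ln_powr)
  ultimately have L: "ln 2 + (a/2) * ln \<theta> + (a/2) * ln (1-\<theta>) \<le> ln ((1-\<theta>) powr a + \<theta> powr a)" by simp
  have "(1+r) * (ln 2 + (a/2) * ln \<theta> + (a/2) * ln (1-\<theta>)) \<le> (1+r) * ln ((1-\<theta>) powr a + \<theta> powr a)"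
    using L r by (intro mult_left_mono) auto
  moreover have "(1+r) * (ln 2 + (a/2) * ln \<theta> + (a/2) * ln (1-\<theta>)) = (1+r)*ln 2 + (ln \<theta> + ln (1-\<theta>))/2"
  proof -
    have "(1+r) * (ln 2 + (a/2) * ln \<theta> + (a/2) * ln (1-\<theta>)) = (1+r)*ln 2 + ((1+r)*a) * (ln \<theta> + ln (1-\<theta>))/2"
      by (simp add: field_simps)
    thus ?thesis using a1 by simp
  qed
  moreover have "0 \<le> r * R" using r assms by auto
  moreover have "Eterm R \<theta> r = r*ln 2 - (1+r)*ln((1-\<theta>) powr a + \<theta> powr a) - r*R"
    unfolding Eterm_def a_def by simp
  moreover have "(1+r)*ln 2 = ln 2 + r * ln 2" by (simp add: algebra_simps)
  ultimately show ?thesis by linarith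
qed

lemma Er_half: assumes "0 < \<theta>" "\<theta> < 1" "0 \<le> R"
  shows "Er_star R \<theta> \<le> - ln 2 - (ln \<theta> + ln (1-\<theta>)) / 2"
  unfolding Er_eq using Eterm_half[OF assms] by (intro cSUP_least) auto



lemma ln_lower: "0 < (x::real) \<Longrightarrow> 1 - 1/x \<le> ln x"
  using ln_le_minus_one[of "1/x"] by (simp add: ln_div)

lemma lemC: assumes "0 \<le> (\<delta>::real)" "\<delta> < 1/2"
  shows "- ln 2 < \<delta> * ln ((1+2*\<delta>)/4) + (1-\<delta>) * ln (1 - (1+2*\<delta>)/4)"
proof -
  define x1 where "x1 = (1+2*\<delta>)/2"
  define x2 where "x2 = (3-2*\<delta>)/2"
  have p: "0 < x1" "0 < x2" using assms unfolding x1_def x2_def by auto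
  have q1: "(1+2*\<delta>)/4 = x1/2" unfolding x1_def by simp
  have r1: "ln (x1/2) = ln x1 - ln 2" by (rule ln_divide_pos) (use p in auto)
  have e1: "ln ((1+2*\<delta>)/4) = ln x1 - ln 2" by (simp only: q1 r1)
  have q2: "1 - (1+2*\<delta>)/4 = x2/2" unfolding x2_def by (simp add: field_simps)
  have r2: "ln (x2/2) = ln x2 - ln 2" by (rule ln_divide_pos) (use p in auto)
  have e2: "ln (1 - (1+2*\<delta>)/4) = ln x2 - ln 2" by (simp only: q2 r2)
  have l1: "\<delta> * (1 - 1/x1) \<le> \<delta> * ln x1" using ln_lower[OF p(1)] assms by (intro mult_left_mono) auto
  have l2: "(1-\<delta>) * (1 - 1/x2) \<le> (1-\<delta>) * ln x2" using ln_lower[OF p(2)] assms by (intro mult_left_mono) auto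
  have k: "\<delta> * (1 - 1/x1) + (1-\<delta>) * (1 - 1/x2) = (1-2*\<delta>)^2 / ((1+2*\<delta>)*(3-2*\<delta>))"
    unfolding x1_def x2_def using assms by (simp add: field_simps power2_eq_square)
  have "0 < (1-2*\<delta>)^2 / ((1+2*\<delta>)*(3-2*\<delta>))" using assms by (intro divide_pos_pos mult_pos_pos) auto
  hence "0 < \<delta> * ln x1 + (1-\<delta>) * ln x2" using k l1 l2 by linarith
  moreover have "\<delta> * ln ((1+2*\<delta>)/4) + (1-\<delta>) * ln (1 - (1+2*\<delta>)/4) = \<delta> * ln x1 + (1-\<delta>) * ln x2 - ln 2"
    unfolding e1 e2 by (simp add: algebra_simps)
  ultimately show ?thesis by linarith
qed



definition tm :: "nat \<Rightarrow> real \<Rightarrow> real \<Rightarrow> nat \<Rightarrow> real \<Rightarrow> ereal" where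
  "tm N R \<xi> d \<theta> = ereal (1 / real N) * ln_ext (\<theta> ^ d * (1 - \<theta>) ^ (N - d)) + ereal (\<xi> * Er_star R \<theta>)"

definition Phi :: "nat \<Rightarrow> real \<Rightarrow> real \<Rightarrow> nat \<Rightarrow> ereal" where
  "Phi N R \<xi> d = (SUP \<theta>\<in>{0..1::real}. tm N R \<xi> d \<theta>)"

definition gg :: "real \<Rightarrow> real \<Rightarrow> real \<Rightarrow> real \<Rightarrow> real" where
  "gg R \<xi> \<delta> \<theta> = \<delta> * ln \<theta> + (1 - \<delta>) * ln (1 - \<theta>) + \<xi> * Er_star R \<theta>"

lemma minimax_Phi: "minimax_metric N R \<xi> x y = Phi N R \<xi> (hamming x y)"
  unfolding minimax_metric_def Phi_def tm_def bsc_prob_def by simp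

lemma hamming_le: "length x = N \<Longrightarrow> hamming x y \<le> N"
  unfolding hamming_def using card_mono[of "{..<N}" "{i. i < length x \<and> x ! i \<noteq> y ! i}"] by auto

lemma Er_sym: "Er_star R (1 - \<theta>) = Er_star R \<theta>"
  unfolding Er_star_def by (simp add: add.commute)

lemma img01: "(\<lambda>t. 1 - t) ` {0..1} = {0..1::real}"
proof
  show "{0..1} \<subseteq> (\<lambda>t. 1 - t) ` {0..1::real}"
  proof
    fix x :: real assume "x \<in> {0..1}"
    thus "x \<in> (\<lambda>t. 1 - t) ` {0..1}" by (intro image_eqI[of _ _ "1-x"]) auto
  qed
qed auto

lemma Phi_sym: assumes "d \<le> N" shows "Phi N R \<xi> (N - d) = Phi N R \<xi> d"
proof -
  have "Phi N R \<xi> d = (SUP \<theta>\<in>(\<lambda>t. 1 - t) ` {0..1}. tm N R \<xi> d \<theta>)"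
    unfolding Phi_def img01 ..
  also have "\<dots> = (SUP t\<in>{0..1}. tm N R \<xi> d (1 - t))"
    by (simp only: image_image)
  also have "\<dots> = Phi N R \<xi> (N - d)"
    unfolding Phi_def
  proof (rule SUP_cong)
    fix t :: real assume "t \<in> {0..1}"
    have "N - (N - d) = d" using assms by simp
    thus "tm N R \<xi> d (1 - t) = tm N R \<xi> (N - d) t"
      unfolding tm_def Er_sym by (simp add: mult.commute)
  qed simp
  finally show ?thesis ..
qed

lemma tm_int: assumes "0 < \<theta>" "\<theta> < 1" "d \<le> N" "0 < N"
  shows "tm N R \<xi> d \<theta> = ereal (gg R \<xi> (real d / real N) \<theta>)"
proof -
  have pos: "0 < \<theta> ^ d * (1 - \<theta>) ^ (N - d)" using assms by simp
  have "ln (\<theta> ^ d * (1 - \<theta>) ^ (N - d)) = real d * ln \<theta> + real (N - d) * ln (1 - \<theta>)"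
    using assms by (simp add: ln_mult ln_realpow)
  moreover have "(real d * ln \<theta> + real (N - d) * ln (1 - \<theta>)) / real N
      = real d / real N * ln \<theta> + (1 - real d / real N) * ln (1 - \<theta>)"
    using assms by (simp add: of_nat_diff field_simps)
  ultimately show ?thesis
    unfolding tm_def gg_def ln_ext_def using pos by simp
qed

lemma tm_0: assumes "0 < d" "0 < N" shows "tm N R \<xi> d 0 = -\<infinity>"
  using assms unfolding tm_def ln_ext_def by (simp add: power_0_left)

lemma tm_1: assumes "d < N" "0 < N" shows "tm N R \<xi> d 1 = -\<infinity>"
  using assms unfolding tm_def ln_ext_def by (simp add: power_0_left)

lemma tm_le: assumes "0 \<le> \<theta>" "\<theta> \<le> 1" "0 < N" "0 \<le> R" "0 \<le> \<xi>" "\<xi> \<le> 1"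
  shows "tm N R \<xi> d \<theta> \<le> ereal (ln 2)"
proof -
  define p where "p = \<theta> ^ d * (1 - \<theta>) ^ (N - d)"
  have "p \<le> 1" unfolding p_def using assms by (intro mult_le_one power_le_one) auto
  hence "ln_ext p \<le> 0" unfolding ln_ext_def by auto
  hence a: "ereal (1 / real N) * ln_ext p \<le> 0"
    using assms by (cases "ln_ext p") (auto simp: mult_nonneg_nonpos divide_nonpos_pos)
  have E: "0 \<le> Er_star R \<theta>" "Er_star R \<theta> \<le> ln 2" using Er_nonneg Er_le_ln2 assms by auto
  have "\<xi> * Er_star R \<theta> \<le> Er_star R \<theta>" using E assms by (simp add: mult_left_le_one_le)
  hence b: "ereal (\<xi> * Er_star R \<theta>) \<le> ereal (ln 2)" using E by simp
  have "ereal (1 / real N) * ln_ext p + ereal (\<xi> * Er_star R \<theta>) \<le> 0 + ereal (ln 2)"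
    by (rule add_mono[OF a b])
  thus ?thesis unfolding tm_def p_def by simp
qed



lemma gg_half: assumes "0 < \<theta>" "\<theta> < 1" "0 \<le> R" "0 \<le> \<xi>" "\<xi> \<le> 1"
  shows "gg R \<xi> (1/2) \<theta> \<le> - ln 2"
proof -
  have E: "0 \<le> Er_star R \<theta>" using Er_nonneg assms by auto
  have "\<xi> * Er_star R \<theta> \<le> Er_star R \<theta>" using E assms by (simp add: mult_left_le_one_le)
  moreover have "Er_star R \<theta> \<le> - ln 2 - (ln \<theta> + ln (1-\<theta>)) / 2" using Er_half assms by auto
  ultimately show ?thesis unfolding gg_def by (simp add: field_simps)
qed

lemma Phi_le: assumes "0 < N" "0 \<le> R" "0 \<le> \<xi>" "\<xi> \<le> 1"
  shows "Phi N R \<xi> d \<le> ereal (ln 2)"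
  unfolding Phi_def using tm_le assms by (intro SUP_least) auto

lemma Phi_strict:
  assumes N: "0 < N" and R: "0 \<le> R" and xi: "0 \<le> \<xi>" "\<xi> \<le> 1"
    and d: "d1 < d2" "2 * d2 \<le> N"
  shows "Phi N R \<xi> d2 < Phi N R \<xi> d1"
proof -
  define \<delta>1 where "\<delta>1 = real d1 / real N"
  define \<delta>2 where "\<delta>2 = real d2 / real N"
  have "real d1 < real d2" "2 * real d2 \<le> real N" using d by linarith+
  hence dd: "0 \<le> \<delta>1" "\<delta>1 < \<delta>2" "\<delta>2 \<le> 1/2" unfolding \<delta>1_def \<delta>2_def using N
    by (auto simp: divide_strict_right_mono field_simps)
  define \<theta>0 where "\<theta>0 = (1 + 2*\<delta>1)/4"
  have t0: "0 < \<theta>0" "\<theta>0 < 1" unfolding \<theta>0_def using dd by auto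
  have "0 \<le> Er_star R \<theta>0" using Er_nonneg t0 R by auto
  hence "\<delta>1 * ln \<theta>0 + (1-\<delta>1) * ln (1 - \<theta>0) \<le> gg R \<xi> \<delta>1 \<theta>0" unfolding gg_def using xi by simp
  moreover have "- ln 2 < \<delta>1 * ln \<theta>0 + (1-\<delta>1) * ln (1 - \<theta>0)"
    unfolding \<theta>0_def using lemC dd by auto
  ultimately have v: "- ln 2 < gg R \<xi> \<delta>1 \<theta>0" by linarith
  have "d1 \<le> N" using d by linarith
  have "tm N R \<xi> d1 \<theta>0 \<le> Phi N R \<xi> d1" unfolding Phi_def using t0 by (intro SUP_upper) auto
  hence lo: "ereal (gg R \<xi> \<delta>1 \<theta>0) \<le> Phi N R \<xi> d1"
    using tm_int[OF t0 \<open>d1 \<le> N\<close> N] unfolding \<delta>1_def by simp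
  have hi: "Phi N R \<xi> d1 \<le> ereal (ln 2)" using Phi_le N R xi by auto
  obtain P where P: "Phi N R \<xi> d1 = ereal P" using lo hi by (cases "Phi N R \<xi> d1") auto
  have Pv: "- ln 2 < P" using lo P v by simp
  define lam0 where "lam0 = (1 - 2*\<delta>2) / (1 - 2*\<delta>1)"
  have lam: "0 \<le> lam0" "lam0 < 1" unfolding lam0_def using dd by (auto simp: field_simps)
  have nz: "1 - 2*\<delta>1 \<noteq> 0" using dd by auto
  have "lam0 * (1 - 2*\<delta>1) = 1 - 2*\<delta>2" unfolding lam0_def using nz by simp
  hence "lam0 - 2*(lam0*\<delta>1) = 1 - 2*\<delta>2" by (simp add: algebra_simps)
  hence lamd: "\<delta>2 = lam0 * \<delta>1 + (1 - lam0) / 2" by (simp add: field_simps)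
  define M where "M = lam0 * P + (1 - lam0) * (- ln 2)"
  have MP: "M < P"
  proof -
    have "0 < (1 - lam0) * (P + ln 2)" using lam Pv by (intro mult_pos_pos) auto
    thus ?thesis unfolding M_def by (simp add: algebra_simps)
  qed
  have "Phi N R \<xi> d2 \<le> ereal M"
    unfolding Phi_def
  proof (rule SUP_least)
    fix \<theta> :: real assume th: "\<theta> \<in> {0..1}"
    show "tm N R \<xi> d2 \<theta> \<le> ereal M"
    proof (cases "\<theta> = 0")
      case True thus ?thesis using tm_0[of d2 N] d N by simp
    next
      case False
      show ?thesis
      proof (cases "\<theta> = 1")
        case True thus ?thesis using tm_1[of d2 N] d N by simp
      next
        case False
        have t: "0 < \<theta>" "\<theta> < 1" using th False \<open>\<theta> \<noteq> 0\<close> by auto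
        have "d2 \<le> N" using d by linarith
        have g1: "ereal (gg R \<xi> \<delta>1 \<theta>) \<le> ereal P"
        proof -
          have "tm N R \<xi> d1 \<theta> \<le> Phi N R \<xi> d1" unfolding Phi_def using th by (intro SUP_upper) auto
          thus ?thesis using tm_int[OF t \<open>d1 \<le> N\<close> N] P unfolding \<delta>1_def by simp
        qed
        hence g1': "gg R \<xi> \<delta>1 \<theta> \<le> P" by simp
        have g2: "gg R \<xi> (1/2) \<theta> \<le> - ln 2" using gg_half t R xi by auto
        have id: "gg R \<xi> \<delta>2 \<theta> = lam0 * gg R \<xi> \<delta>1 \<theta> + (1 - lam0) * gg R \<xi> (1/2) \<theta>"
          unfolding gg_def lamd by (simp add: algebra_simps)
        have "lam0 * gg R \<xi> \<delta>1 \<theta> \<le> lam0 * P" using g1' lam by (intro mult_left_mono) auto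
        moreover have "(1 - lam0) * gg R \<xi> (1/2) \<theta> \<le> (1 - lam0) * (- ln 2)" using g2 lam by (intro mult_left_mono) auto
        ultimately have "gg R \<xi> \<delta>2 \<theta> \<le> M" unfolding id M_def by linarith
        thus ?thesis using tm_int[OF t \<open>d2 \<le> N\<close> N] unfolding \<delta>2_def by simp
      qed
    qed
  qed
  also have "\<dots> < Phi N R \<xi> d1" using MP P by simp
  finally show ?thesis .
qed

lemma Phi_m: assumes "d \<le> N" shows "Phi N R \<xi> (min d (N - d)) = Phi N R \<xi> d"
  using Phi_sym[OF assms] by (cases "d \<le> N - d") (auto simp: min_def)

lemma key:
  assumes N: "0 < N" and R: "0 \<le> R" and xi: "0 \<le> \<xi>" "\<xi> \<le> 1"
    and d: "d1 \<le> N" "d2 \<le> N"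
  shows "Phi N R \<xi> d2 \<le> Phi N R \<xi> d1 \<longleftrightarrow> min d1 (N - d1) \<le> min d2 (N - d2)"
proof -
  define m1 where "m1 = min d1 (N - d1)"
  define m2 where "m2 = min d2 (N - d2)"
  have h1: "2 * m1 \<le> N" "2 * m2 \<le> N" unfolding m1_def m2_def by auto
  have e: "Phi N R \<xi> d1 = Phi N R \<xi> m1" "Phi N R \<xi> d2 = Phi N R \<xi> m2"
    unfolding m1_def m2_def using Phi_m d by auto
  have "Phi N R \<xi> m2 \<le> Phi N R \<xi> m1 \<longleftrightarrow> m1 \<le> m2"
  proof (cases m1 m2 rule: linorder_cases)
    case less thus ?thesis using Phi_strict[OF N R xi less h1(2)] by auto
  next
    case equal thus ?thesis by auto
  next
    case greater thus ?thesis using Phi_strict[OF N R xi greater h1(1)] by auto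
  qed
  thus ?thesis using e unfolding m1_def m2_def by simp
qed

lemma rho_eq: assumes "length x = N" "0 < N"
  shows "rho_metric N x y = real (min (hamming x y) (N - hamming x y)) / real N"
proof -
  have "hamming x y \<le> N" using hamming_le assms by auto
  thus ?thesis unfolding rho_metric_def rel_dist_def using assms
    by (auto simp: min_def of_nat_diff field_simps)
qed

lemma part1:
  assumes N: "0 < N" and R: "0 \<le> R" and xi: "0 \<le> \<xi>" "\<xi> \<le> 1"
    and l: "length y = N" "length x1 = N" "length x2 = N"
  shows "minimax_metric N R \<xi> x1 y \<ge> minimax_metric N R \<xi> x2 y
             \<longleftrightarrow> rho_metric N x1 y \<le> rho_metric N x2 y"
proof -
  have d: "hamming x1 y \<le> N" "hamming x2 y \<le> N" using hamming_le l by auto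
  show ?thesis unfolding minimax_Phi rho_eq[OF l(2) N] rho_eq[OF l(3) N]
    using key[OF N R xi d] N by (simp add: divide_le_cancel)
qed

theorem mainTheorem6:
  fixes N :: nat and R \<xi> :: real
  assumes "0 < N" and "0 \<le> R" and "0 \<le> \<xi>" and "\<xi> \<le> 1"
  shows "(\<forall>y x1 x2. length y = N \<longrightarrow> length x1 = N \<longrightarrow> length x2 = N \<longrightarrow>
            (minimax_metric N R \<xi> x1 y \<ge> minimax_metric N R \<xi> x2 y
             \<longleftrightarrow> rho_metric N x1 y \<le> rho_metric N x2 y))
       \<and> (\<forall>C y. (\<forall>c\<in>C. length c = N) \<longrightarrow> length y = N \<longrightarrow>
            {x\<in>C. \<forall>x'\<in>C. minimax_metric N R \<xi> x' y \<le> minimax_metric N R \<xi> x y}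
            = {x\<in>C. \<forall>x'\<in>C. rho_metric N x y \<le> rho_metric N x' y})"
proof (intro conjI allI impI)
  fix y x1 x2 :: "bool list"
  assume "length y = N" "length x1 = N" "length x2 = N"
  thus "minimax_metric N R \<xi> x1 y \<ge> minimax_metric N R \<xi> x2 y
             \<longleftrightarrow> rho_metric N x1 y \<le> rho_metric N x2 y"
    using part1 assms by blast
next
  fix C :: "bool list set" and y :: "bool list"
  assume C: "\<forall>c\<in>C. length c = N" and y: "length y = N"
  have "\<And>x x'. x \<in> C \<Longrightarrow> x' \<in> C \<Longrightarrow>
     (minimax_metric N R \<xi> x' y \<le> minimax_metric N R \<xi> x y) = (rho_metric N x y \<le> rho_metric N x' y)"
    using part1[OF assms y] C by blast
  thus "{x\<in>C. \<forall>x'\<in>C. minimax_metric N R \<xi> x' y \<le> minimax_metric N R \<xi> x y}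
            = {x\<in>C. \<forall>x'\<in>C. rho_metric N x y \<le> rho_metric N x' y}" by blast
qed

end
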